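(* Let $p$ be a prime and let $\varphi\in\mathbb{Z}[x]$ with $\varphi\not\equiv 0\bmod p$. Let $l,m$ be nonnegative integers and let $I=\langle p^l,\varphi^m\rangle$ be the ideal of $\mathbb{Z}[x]$. Then (1) $I:\langle p^i\rangle=\langle p^{l-i},\varphi^m\rangle$ for every $i\le l$, and (2) $I:\langle\varphi^j\rangle=\langle p^l,\varphi^{m-j}\rangle$ for every $j\le m$.
   Context: For ideals $I,J$ of a commutative ring $S$, the quotient ideal is $I:J=\{a\in S\mid aJ\subseteq I\}$. *)

theory Defs
  imports "HOL-Computational_Algebra.Polynomial" "HOL-Computational_Algebra.Primes"
begin

definition principal_ideal :: "'a::comm_ring_1 \<Rightarrow> 'a set" where
  "principal_ideal a = {r * a | r. True}"

definition ideal2 :: "'a::comm_ring_1 \<Rightarrow> 'a \<Rightarrow> 'a set" where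
  "ideal2 a b = {r * a + s * b | r s. True}"

definition quotient_ideal :: "'a::comm_ring_1 set \<Rightarrow> 'a set \<Rightarrow> 'a set" where
  "quotient_ideal I J = {a. \<forall>b\<in>J. a * b \<in> I}"

end

theory Submission
  imports Defs "HOL-Computational_Algebra.Polynomial_Factorial"
begin

lemma ideal2_comm: "ideal2 a b = ideal2 b a"
  unfolding ideal2_def by (metis add.commute)

lemma colon_gen:
  fixes g A0 B :: "int poly"
  assumes g0: "g \<noteq> 0" and cop: "coprime g B"
  shows "quotient_ideal (ideal2 (g * A0) B) (principal_ideal g) = ideal2 A0 B"
proof
  show "quotient_ideal (ideal2 (g * A0) B) (principal_ideal g) \<subseteq> ideal2 A0 B"
  proof
    fix a assume "a \<in> quotient_ideal (ideal2 (g * A0) B) (principal_ideal g)"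
    hence "a * g \<in> ideal2 (g * A0) B"
      unfolding quotient_ideal_def principal_ideal_def by force
    then obtain r s where e: "a * g = r * (g * A0) + s * B"
      unfolding ideal2_def by blast
    have "s * B = g * (a - r * A0)" using e by (simp add: algebra_simps)
    hence "g dvd s * B" by simp
    hence "g dvd s" using cop coprime_dvd_mult_left_iff by blast
    then obtain t where s: "s = g * t" by blast
    have "g * a = g * (r * A0 + t * B)" using e s by (simp add: algebra_simps)
    hence "a = r * A0 + t * B" using g0 by simp
    thus "a \<in> ideal2 A0 B" unfolding ideal2_def by blast
  qed
next
  show "ideal2 A0 B \<subseteq> quotient_ideal (ideal2 (g * A0) B) (principal_ideal g)"
  proof
    fix a assume "a \<in> ideal2 A0 B"
    then obtain r s where a: "a = r * A0 + s * B" unfolding ideal2_def by blast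
    show "a \<in> quotient_ideal (ideal2 (g * A0) B) (principal_ideal g)"
      unfolding quotient_ideal_def
    proof (intro CollectI ballI)
      fix b assume "b \<in> principal_ideal g"
      then obtain c where b: "b = c * g" unfolding principal_ideal_def by blast
      have "a * b = (r * c) * (g * A0) + (s * c * g) * B"
        using a b by (simp add: algebra_simps)
      thus "a * b \<in> ideal2 (g * A0) B" unfolding ideal2_def by blast
    qed
  qed
qed

theorem claim6:
  fixes p :: int and \<phi> :: "int poly" and l m :: nat
  assumes "prime p"
    and "\<not> (\<forall>k. p dvd coeff \<phi> k)"
  shows "(\<forall>i\<le>l. quotient_ideal (ideal2 ([:p:] ^ l) (\<phi> ^ m)) (principal_ideal ([:p:] ^ i))
                 = ideal2 ([:p:] ^ (l - i)) (\<phi> ^ m))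
       \<and> (\<forall>j\<le>m. quotient_ideal (ideal2 ([:p:] ^ l) (\<phi> ^ m)) (principal_ideal (\<phi> ^ j))
                 = ideal2 ([:p:] ^ l) (\<phi> ^ (m - j)))"
proof -
  have pe: "prime_elem [:p:]" using assms(1) prime_elem_const_poly_iff by auto
  have nd: "\<not> [:p:] dvd \<phi>" using assms(2) const_poly_dvd_iff by blast
  have cop: "coprime [:p:] \<phi>" using pe nd prime_elem_imp_coprime by blast
  have p0: "[:p:] \<noteq> 0" using assms(1) by auto
  have f0: "\<phi> \<noteq> 0" using assms(2) by auto
  show ?thesis
  proof (intro conjI allI impI)
    fix i assume "i \<le> l"
    hence "[:p:] ^ l = [:p:] ^ i * [:p:] ^ (l - i)" by (simp add: power_add[symmetric])
    thus "quotient_ideal (ideal2 ([:p:] ^ l) (\<phi> ^ m)) (principal_ideal ([:p:] ^ i))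
                 = ideal2 ([:p:] ^ (l - i)) (\<phi> ^ m)"
      using colon_gen[of "[:p:] ^ i" "\<phi> ^ m" "[:p:] ^ (l - i)"] p0 cop by simp
  next
    fix j assume "j \<le> m"
    hence e: "\<phi> ^ m = \<phi> ^ j * \<phi> ^ (m - j)" by (simp add: power_add[symmetric])
    have c2: "coprime (\<phi> ^ j) ([:p:] ^ l)" using cop by (simp add: coprime_commute)
    show "quotient_ideal (ideal2 ([:p:] ^ l) (\<phi> ^ m)) (principal_ideal (\<phi> ^ j))
                 = ideal2 ([:p:] ^ l) (\<phi> ^ (m - j))"
      using colon_gen[OF _ c2, of "\<phi> ^ (m - j)"] f0 e
      by (simp add: ideal2_comm[of "[:p:] ^ l"])
  qed
qed

end
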